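(* Let $\lambda=(\lambda_i)\in\{0,\dots,l-1\}^n$ and $v\in V^0_\varepsilon(\lambda)$. (a) $E_iv=0$ for all $i\in I$ if and only if $v\in\mathbb Cv(0)$. (b) $F_iv=0$ for all $i\in I$ if and only if $v\in\mathbb Cv(m^\lambda)$, where $m^\lambda=(m^\lambda_{ij})_{1\le i\le j\le n}\in\{0,\dots,l-1\}^N$ is defined by $m^\lambda_{ij}\equiv\sum_{k=1}^i\lambda_{j-k+1}\pmod l$.
   Context: $n\ge1$, $I=\{1,\dots,n\}$, $N=n(n+1)/2$; $l>2$ odd, $\gcd(l,n+1)=1$, $\varepsilon$ a primitive $l$-th root of unity; $[c]_\varepsilon=(\varepsilon^c-\varepsilon^{-c})/(\varepsilon-\varepsilon^{-1})$ for $c\in\mathbb Z$. $U_\varepsilon$: the $\mathbb C$-algebra generated by $E_i,F_i,K_\mu$ ($i\in I$, $\mu$ in the root lattice of $\mathfrak{sl}_{n+1}$) with the relations of $U_q(\mathfrak{sl}_{n+1})$ at $q=\varepsilon$. $V^0_\varepsilon(\lambda)$: vector space with basis $v(m)$, $m=(m_{ij})_{1\le i\le j\le n}\in\{0,\dots,l-1\}^N$, with $v(m+lm')=v(m)$ ($m'\in\mathbb Z^N$); $\epsilon_{ij}$ unit vectors; $\alpha_{i,j}=\sum_{k=j+1}^i\epsilon_{k-1,n-i+k}-\sum_{k=j}^i\epsilon_{k,n-i+k}$ ($j\le i$); for $c\in\mathbb Z^N$ ($c_{ij}=0$ outside range) $M_{i,j}(c)=\sum_{k=i-1}^{j-1}(c_{i,k}-c_{i-1,k})+\sum_{k=i}^j(c_{i,k}-c_{i+1,k})$,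 $N_{i,j}(c)=c_{j-1,n-i+j}-c_{j,n-i+j}$, $\mu_i(c)=\sum_{k=i-1}^nc_{i-1,k}-2\sum_{k=i}^nc_{i,k}+\sum_{k=i+1}^nc_{i+1,k}$. It is the $U_\varepsilon$-module (Schnizer module with all $a_{ij}=1$, $b_{ij}=0$) with $E_iv(m)=\sum_{j=1}^i[N_{i,j}(m)]_\varepsilon v(m+\alpha_{i,j})$, $F_iv(m)=\sum_{j=i}^n[M_{i,j}(m)-\lambda_i]_\varepsilon v(m+\epsilon_{i,j})$, $K_{\alpha_i}v(m)=\varepsilon^{\mu_i(m)+\lambda_i}v(m)$. *)

theory Defs
  imports Complex_Main
begin

text \<open>Basis labels of the Schnizer module: functions m :: nat \<times> nat \<Rightarrow> int,
  where only the entries (i,j) with 1 \<le> i \<le> j \<le> n are meaningful; all other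
  entries are 0 (the convention c_ij = 0 outside range).\<close>

type_synonym label = "nat \<times> nat \<Rightarrow> int"

definition in_range :: "nat \<Rightarrow> nat \<Rightarrow> nat \<Rightarrow> bool" where
  "in_range n i j \<longleftrightarrow> 1 \<le> i \<and> i \<le> j \<and> j \<le> n"

definition Idx :: "nat \<Rightarrow> nat \<Rightarrow> label set" where
  "Idx n l = {m. \<forall>i j. (in_range n i j \<longrightarrow> 0 \<le> m (i,j) \<and> m (i,j) < int l)
                      \<and> (\<not> in_range n i j \<longrightarrow> m (i,j) = 0)}"

text \<open>Reduction mod l (implements v(m + l m') = v(m)).\<close>
definition red :: "nat \<Rightarrow> nat \<Rightarrow> label \<Rightarrow> label" where
  "red n l m = (\<lambda>(i,j). if in_range n i j then m (i,j) mod int l else 0)"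

definition unitv :: "nat \<Rightarrow> nat \<Rightarrow> label" where
  "unitv i j = (\<lambda>p. if p = (i,j) then 1 else 0)"

definition alpha :: "nat \<Rightarrow> nat \<Rightarrow> nat \<Rightarrow> label" where
  "alpha n i j = (\<lambda>p. (\<Sum>k\<in>{j+1..i}. unitv (k-1) (n-i+k) p) - (\<Sum>k\<in>{j..i}. unitv k (n-i+k) p))"

definition Mcoef :: "nat \<Rightarrow> label \<Rightarrow> nat \<Rightarrow> nat \<Rightarrow> int" where
  "Mcoef n c i j = (\<Sum>k\<in>{i-1..j-1}. c (i,k) - c (i-1,k)) + (\<Sum>k\<in>{i..j}. c (i,k) - c (i+1,k))"

definition Ncoef :: "nat \<Rightarrow> label \<Rightarrow> nat \<Rightarrow> nat \<Rightarrow> int" where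
  "Ncoef n c i j = c (j-1, n-i+j) - c (j, n-i+j)"

definition qint :: "complex \<Rightarrow> int \<Rightarrow> complex" where
  "qint \<epsilon> c = (\<epsilon> powi c - \<epsilon> powi (-c)) / (\<epsilon> - inverse \<epsilon>)"

definition primitive_root :: "nat \<Rightarrow> complex \<Rightarrow> bool" where
  "primitive_root l \<epsilon> \<longleftrightarrow> \<epsilon> ^ l = 1 \<and> (\<forall>k. 0 < k \<and> k < l \<longrightarrow> \<epsilon> ^ k \<noteq> 1)"

text \<open>Vectors of V^0_\<epsilon>(\<lambda>): coefficient functions supported on Idx n l;
  the vector v(m) is the indicator of red m.\<close>
definition Vspace :: "nat \<Rightarrow> nat \<Rightarrow> (label \<Rightarrow> complex) set" where
  "Vspace n l = {v. \<forall>m. m \<notin> Idx n l \<longrightarrow> v m = 0}"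

definition basis :: "label \<Rightarrow> (label \<Rightarrow> complex)" where
  "basis m = (\<lambda>m'. if m' = m then 1 else 0)"

definition Eop :: "nat \<Rightarrow> nat \<Rightarrow> complex \<Rightarrow> nat \<Rightarrow> (label \<Rightarrow> complex) \<Rightarrow> (label \<Rightarrow> complex)" where
  "Eop n l \<epsilon> i v = (\<lambda>m'. \<Sum>m\<in>Idx n l. \<Sum>j\<in>{1..i}.
      if red n l (\<lambda>p. m p + alpha n i j p) = m' then v m * qint \<epsilon> (Ncoef n m i j) else 0)"

definition Fop :: "nat \<Rightarrow> nat \<Rightarrow> complex \<Rightarrow> (nat \<Rightarrow> nat) \<Rightarrow> nat \<Rightarrow> (label \<Rightarrow> complex) \<Rightarrow> (label \<Rightarrow> complex)" where
  "Fop n l \<epsilon> lam i v = (\<lambda>m'. \<Sum>m\<in>Idx n l. \<Sum>j\<in>{i..n}.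
      if red n l (\<lambda>p. m p + unitv i j p) = m' then v m * qint \<epsilon> (Mcoef n m i j - int (lam i)) else 0)"

definition mlam :: "nat \<Rightarrow> nat \<Rightarrow> (nat \<Rightarrow> nat) \<Rightarrow> label" where
  "mlam n l lam = (\<lambda>(i,j). if in_range n i j
      then (\<Sum>k\<in>{1..i}. int (lam (j-k+1))) mod int l else 0)"

end

theory Submission
  imports Defs
begin


lemma red_apply: "red n l m (i,j) = (if in_range n i j then m (i,j) mod int l else 0)"
  by (simp add: red_def)

lemma Idx_out: "m \<in> Idx n l \<Longrightarrow> \<not> in_range n i j \<Longrightarrow> m (i,j) = 0"
  by (simp add: Idx_def)

lemma Idx_in: "m \<in> Idx n l \<Longrightarrow> in_range n i j \<Longrightarrow> 0 \<le> m (i,j) \<and> m (i,j) < int l"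
  by (simp add: Idx_def)

lemma finite_Idx: "finite (Idx n l)"
proof -
  let ?A = "{p. in_range n (fst p) (snd p)}"
  have fA: "finite ?A"
    by (rule finite_subset[of _ "{1..n} \<times> {1..n}"]) (auto simp: in_range_def)
  have "Idx n l = {f. \<forall>x. (x \<in> ?A \<longrightarrow> f x \<in> {0..<int l}) \<and> (x \<notin> ?A \<longrightarrow> f x = 0)}"
    unfolding Idx_def by (auto simp: split_paired_all)
  then show ?thesis using finite_set_of_finite_funs[OF fA, of "{0..<int l}" 0] by simp
qed

lemma red_inj:
  assumes "m \<in> Idx n l" "m' \<in> Idx n l"
    "red n l (\<lambda>p. m p + x p) = red n l (\<lambda>p. m' p + x p)"
  shows "m = m'"
proof (rule ext)
  fix p :: "nat \<times> nat"
  obtain a b where p: "p = (a,b)" by force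
  show "m p = m' p"
  proof (cases "in_range n a b")
    case True
    from fun_cong[OF assms(3), of "(a,b)"] True
    have "(m (a,b) + x (a,b)) mod int l = (m' (a,b) + x (a,b)) mod int l"
      by (simp add: red_apply)
    then have "int l dvd (m (a,b) + x (a,b)) - (m' (a,b) + x (a,b))"
      by (simp only: mod_eq_dvd_iff)
    then have "int l dvd m (a,b) - m' (a,b)" by simp
    then have "m (a,b) mod int l = m' (a,b) mod int l"
      by (simp only: mod_eq_dvd_iff)
    then show ?thesis using Idx_in[OF assms(1) True] Idx_in[OF assms(2) True] p by simp
  next
    case False
    then show ?thesis using Idx_out[OF assms(1) False] Idx_out[OF assms(2) False] p by simp
  qed
qed

lemma prim_pow_nat:
  assumes "primitive_root l e" "l > 0"
  shows "e ^ k = 1 \<longleftrightarrow> l dvd k"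
proof -
  have e: "e ^ l = 1" using assms by (simp add: primitive_root_def)
  have "e ^ k = e ^ (l * (k div l) + k mod l)" by simp
  also have "\<dots> = (e ^ l) ^ (k div l) * e ^ (k mod l)" by (simp only: power_add power_mult)
  also have "\<dots> = e ^ (k mod l)" by (simp only: e power_one mult_1)
  finally have k: "e ^ k = e ^ (k mod l)" .
  show ?thesis
  proof (cases "k mod l = 0")
    case True then show ?thesis using k by (simp add: dvd_eq_mod_eq_0)
  next
    case False
    have "k mod l < l" using assms by simp
    then have "e ^ (k mod l) \<noteq> 1" using False assms(1) unfolding primitive_root_def by blast
    then show ?thesis using k False by (simp add: dvd_eq_mod_eq_0)
  qed
qed

lemma prim_nz:
  assumes "primitive_root l e" "l > 0" shows "e \<noteq> 0"
proof
  assume "e = 0"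
  then have "e ^ l = 0" using assms(2) by simp
  moreover have "e ^ l = 1" using assms(1) by (simp add: primitive_root_def)
  ultimately show False by simp
qed

lemma self_inv: "(x::complex) \<noteq> 0 \<Longrightarrow> (x = inverse x) \<longleftrightarrow> x * x = 1"
proof
  assume "x \<noteq> 0" "x = inverse x"
  then have "x * x = x * inverse x" by simp
  then show "x * x = 1" using \<open>x \<noteq> 0\<close> by simp
next
  assume "x * x = 1"
  then show "x = inverse x" using inverse_unique by metis
qed

lemma prim_powi:
  assumes "primitive_root l e" "l > 0"
  shows "e powi c = 1 \<longleftrightarrow> int l dvd c"
proof -
  have nz: "e \<noteq> 0" using prim_nz assms by blast
  have e: "e powi (int l) = 1" using assms by (simp add: primitive_root_def)
  have "e powi c = e powi (int l * (c div int l) + c mod int l)" by simp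
  also have "\<dots> = e powi (int l * (c div int l)) * e powi (c mod int l)"
    by (rule power_int_add) (simp add: nz)
  also have "e powi (int l * (c div int l)) = 1"
    by (simp only: power_int_mult e power_int_1_left)
  also have "1 * e powi (c mod int l) = e powi (c mod int l)" by simp
  also have "\<dots> = e ^ nat (c mod int l)"
    using assms(2) by (simp add: power_int_nonneg_exp)
  finally have "e powi c = e ^ nat (c mod int l)" .
  moreover have "e ^ nat (c mod int l) = 1 \<longleftrightarrow> l dvd nat (c mod int l)"
    using prim_pow_nat assms by blast
  moreover have "l dvd nat (c mod int l) \<longleftrightarrow> c mod int l = 0"
  proof -
    have r: "0 \<le> c mod int l" "c mod int l < int l" using assms by auto
    then have lt: "nat (c mod int l) < l" by simp
    have "l dvd nat (c mod int l) \<longleftrightarrow> nat (c mod int l) = 0"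
    proof
      assume d: "l dvd nat (c mod int l)"
      show "nat (c mod int l) = 0"
      proof (rule ccontr)
        assume "nat (c mod int l) \<noteq> 0"
        then have "l \<le> nat (c mod int l)" using d by (intro dvd_imp_le) auto
        then show False using lt by simp
      qed
    qed simp
    then show ?thesis using r by simp
  qed
  ultimately show ?thesis by (simp add: dvd_eq_mod_eq_0)
qed

lemma qint_zero:
  assumes "primitive_root l e" "l > 2" "odd l"
  shows "qint e c = 0 \<longleftrightarrow> int l dvd c"
proof -
  have l0: "l > 0" using assms by simp
  have nz: "e \<noteq> 0" using prim_nz assms l0 by blast
  have "0 < (2::nat) \<and> 2 < l" using assms by simp
  then have "e ^ 2 \<noteq> 1" using assms(1) unfolding primitive_root_def by blast
  then have den: "e - inverse e \<noteq> 0"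
    using nz self_inv[of e] by (auto simp: power2_eq_square)
  have "qint e c = 0 \<longleftrightarrow> e powi c = e powi (-c)"
    using den by (simp add: qint_def)
  also have "\<dots> \<longleftrightarrow> e powi c * e powi c = 1"
    using nz self_inv[of "e powi c"] by (simp add: power_int_minus)
  also have "e powi c * e powi c = e powi (2 * c)"
  proof -
    have "e powi (2 * c) = e powi (c + c)" by (simp only: mult_2)
    also have "\<dots> = e powi c * e powi c" by (rule power_int_add) (simp add: nz)
    finally show ?thesis by (rule sym)
  qed
  also have "e powi (2*c) = 1 \<longleftrightarrow> int l dvd 2 * c" using prim_powi assms l0 by blast
  also have "\<dots> \<longleftrightarrow> int l dvd c"
  proof -
    have "coprime (int l) 2" using assms(3) by (simp add: coprime_commute)
    then show ?thesis by (simp add: coprime_dvd_mult_right_iff)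
  qed
  finally show ?thesis .
qed



lemma alpha_at1:
  assumes "2 \<le> a" "a \<le> b" "b \<le> n" "1 \<le> j"
  shows "alpha n (n-b+a) j (a-1,b) = (if j < a then 1 else 0)"
proof -
  let ?i = "n-b+a"
  have s1: "(\<Sum>k\<in>{j+1..?i}. unitv (k-1) (n-?i+k) (a-1,b)) = (\<Sum>k\<in>{j+1..?i}. if k = a then 1 else 0)"
    by (rule sum.cong) (use assms in \<open>auto simp: unitv_def\<close>)
  have s2: "(\<Sum>k\<in>{j..?i}. unitv k (n-?i+k) (a-1,b)) = 0"
    by (rule sum.neutral) (use assms in \<open>auto simp: unitv_def\<close>)
  have "a \<le> n-b+a" using assms by simp
  then show ?thesis unfolding alpha_def s1 s2 using assms by simp
qed

lemma alpha_at2: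
  assumes "1 \<le> a" "a \<le> b" "b \<le> n" "1 \<le> j"
  shows "alpha n (n-b+a) j (a, Suc b) = (if j \<le> a \<and> a < n-b+a then 1 else 0)"
proof -
  let ?i = "n-b+a"
  have s1: "(\<Sum>k\<in>{j+1..?i}. unitv (k-1) (n-?i+k) (a, Suc b)) = (\<Sum>k\<in>{j+1..?i}. if k = Suc a then 1 else 0)"
    by (rule sum.cong) (use assms in \<open>auto simp: unitv_def\<close>)
  have s2: "(\<Sum>k\<in>{j..?i}. unitv k (n-?i+k) (a, Suc b)) = 0"
    by (rule sum.neutral) (use assms in \<open>auto simp: unitv_def\<close>)
  show ?thesis unfolding alpha_def s1 s2 using assms by auto
qed

lemma sum_diff4: "(\<Sum>k\<in>A. (a k - b k) - (c k - d k)) = (\<Sum>k\<in>A. a k - c k) - (\<Sum>k\<in>A. (b k - d k)::int)"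
  by (simp add: sum_subtractf sum.distrib algebra_simps)

lemma Mcoef_diff: "Mcoef n (\<lambda>p. x p - y p) i j = Mcoef n x i j - Mcoef n y i j"
  unfolding Mcoef_def sum_diff4 by simp

lemma Mcoef_dvd: "\<forall>p. (k::int) dvd x p \<Longrightarrow> k dvd Mcoef n x i j"
  by (simp add: Mcoef_def dvd_sum dvd_add dvd_diff)

lemma Mcoef_unit_below:
  assumes "i \<le> j"
  shows "Mcoef n (unitv i j) (Suc i) b = (if j \<le> b - 1 then -1 else 0)"
proof -
  have s1: "(\<Sum>k\<in>{Suc i - 1..b - 1}. unitv i j (Suc i, k) - unitv i j (Suc i - 1, k))
      = (\<Sum>k\<in>{i..b - 1}. - (if k = j then 1 else 0))"
    by (rule sum.cong) (auto simp: unitv_def)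
  have s2: "(\<Sum>k\<in>{Suc i..b}. unitv i j (Suc i, k) - unitv i j (Suc i + 1, k)) = 0"
    by (rule sum.neutral) (auto simp: unitv_def)
  show ?thesis unfolding Mcoef_def s1 s2 using assms by (simp add: sum_negf)
qed

lemma Mcoef_diag:
  assumes "\<forall>a b. \<not> in_range n a b \<longrightarrow> d (a,b) = 0" "1 \<le> i"
  shows "Mcoef n d i i = d (i,i) - d (i-1,i-1)"
proof -
  have "d (i, i-1) = 0" "d (i+1, i) = 0" using assms by (auto simp: in_range_def)
  then show ?thesis using assms(2) by (simp add: Mcoef_def)
qed

lemma Mcoef_Suc:
  assumes "1 \<le> i" "i \<le> j"
  shows "Mcoef n d i (Suc j) = Mcoef n d i j + d (i,j) - d (i-1,j) + d (i,Suc j) - d (Suc i,Suc j)"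
proof -
  obtain j0 where j0: "j = Suc j0" using assms by (cases j) auto
  have "{i-1..j} = insert j {i-1..j-1}" using assms j0 by auto
  then have a: "(\<Sum>k\<in>{i-1..j}. d (i,k) - d (i-1,k)) = (d (i,j) - d (i-1,j)) + (\<Sum>k\<in>{i-1..j-1}. d (i,k) - d (i-1,k))"
    using j0 by simp
  have "{i..Suc j} = insert (Suc j) {i..j}" using assms by auto
  then have b: "(\<Sum>k\<in>{i..Suc j}. d (i,k) - d (i+1,k)) = (d (i,Suc j) - d (i+1,Suc j)) + (\<Sum>k\<in>{i..j}. d (i,k) - d (i+1,k))"
    by simp
  show ?thesis unfolding Mcoef_def using a b by simp
qed



lemma sum_single:
  assumes "finite A" "finite B" "x \<in> A" "y \<in> B"
    "\<And>a b. a \<in> A \<Longrightarrow> b \<in> B \<Longrightarrow> g a b = (if a = x \<and> b = y then c else 0)"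
  shows "(\<Sum>a\<in>A. \<Sum>b\<in>B. g a b) = (c::complex)"
proof -
  have "(\<Sum>a\<in>A. \<Sum>b\<in>B. g a b) = (\<Sum>a\<in>A. if a = x then c else 0)"
  proof (rule sum.cong[OF refl])
    fix a assume a: "a \<in> A"
    have "(\<Sum>b\<in>B. g a b) = (\<Sum>b\<in>B. if a = x \<and> b = y then c else 0)"
      using assms(5) a by (intro sum.cong) auto
    also have "\<dots> = (if a = x then c else 0)"
      using assms(2,4) by (cases "a = x") (simp_all add: sum.delta)
    finally show "(\<Sum>b\<in>B. g a b) = (if a = x then c else 0)" .
  qed
  also have "\<dots> = c" using assms(1,3) by (simp add: sum.delta)
  finally show ?thesis .
qed

lemma E_step:
  assumes prim: "primitive_root l e" and l2: "l > 2" and odd: "odd l"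
    and V: "v \<in> Vspace n l"
    and E0: "Eop n l e (n - b + a) v = (\<lambda>_. 0)"
    and rng: "1 \<le> a" "a \<le> b" "b \<le> n"
    and Z1: "\<forall>m. v m \<noteq> 0 \<longrightarrow> m (a-1,b) = 0"
    and Z2: "\<forall>m. v m \<noteq> 0 \<longrightarrow> m (a, Suc b) = 0"
    and vm: "v m \<noteq> 0"
  shows "m (a,b) = 0"
proof (rule ccontr)
  assume ne: "m (a,b) \<noteq> 0"
  define i where "i = n - b + a"
  define t where "t = red n l (\<lambda>p. m p + alpha n i a p)"
  have mI: "m \<in> Idx n l" using V vm by (auto simp: Vspace_def)
  have ai: "a \<in> {1..i}" using rng by (simp add: i_def)
  have key: "(if red n l (\<lambda>p. m' p + alpha n i j' p) = t then v m' * qint e (Ncoef n m' i j') else 0)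
      = (if m' = m \<and> j' = a then v m * qint e (Ncoef n m i a) else 0)"
    if m': "m' \<in> Idx n l" and j': "j' \<in> {1..i}" for m' j'
  proof (cases "red n l (\<lambda>p. m' p + alpha n i j' p) = t")
    case False
    then show ?thesis by (auto simp: t_def)
  next
    case rt: True
    show ?thesis
    proof (cases "v m' = 0")
      case True
      then show ?thesis using vm by auto
    next
      case vm': False
      show ?thesis
      proof (cases "j' = a")
        case True
        then have "m' = m" using red_inj[OF m' mI] rt unfolding t_def by blast
        then show ?thesis using True rt by simp
      next
        case False
        have z1: "m' (a-1,b) = 0" "m (a-1,b) = 0" using Z1 vm vm' by auto
        have z2: "m' (a,Suc b) = 0" "m (a,Suc b) = 0" using Z2 vm vm' by auto
        have eq: "\<And>p. red n l (\<lambda>p. m' p + alpha n i j' p) p = red n l (\<lambda>p. m p + alpha n i a p) p"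
          using rt t_def by simp
        show ?thesis
        proof (cases "j' < a")
          case True
          then have a2: "2 \<le> a" using j' by auto
          have ir: "in_range n (a-1) b" using a2 rng by (auto simp: in_range_def)
          have "(m' (a-1,b) + alpha n i j' (a-1,b)) mod int l = (m (a-1,b) + alpha n i a (a-1,b)) mod int l"
            using eq[of "(a-1,b)"] ir by (simp add: red_apply)
          moreover have "alpha n i j' (a-1,b) = 1" "alpha n i a (a-1,b) = 0"
            using alpha_at1[OF a2 rng(2,3)] True j' ai unfolding i_def by auto
          ultimately have "1 mod int l = 0 mod int l" using z1 by simp
          then show ?thesis using l2 by simp
        next
          case False
          with \<open>j' \<noteq> a\<close> have ja: "a < j'" by simp
          then have ai': "a < i" using j' by auto
          then have bn: "b < n" using rng by (simp add: i_def)
          have ir: "in_range n a (Suc b)" using rng bn by (auto simp: in_range_def)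
          have "(m' (a,Suc b) + alpha n i j' (a,Suc b)) mod int l = (m (a,Suc b) + alpha n i a (a,Suc b)) mod int l"
            using eq[of "(a,Suc b)"] ir by (simp add: red_apply)
          moreover have "alpha n i j' (a,Suc b) = 0" "alpha n i a (a,Suc b) = 1"
            using alpha_at2[OF rng] ja ai' j' ai unfolding i_def by auto
          ultimately have "0 mod int l = 1 mod int l" using z2 by simp
          then show ?thesis using l2 by simp
        qed
      qed
    qed
  qed
  have "Eop n l e i v t = v m * qint e (Ncoef n m i a)"
    unfolding Eop_def by (rule sum_single[OF finite_Idx _ mI ai]) (simp_all add: key)
  moreover have "Eop n l e i v t = 0" using E0 i_def by simp
  moreover have "Ncoef n m i a = - m (a,b)"
  proof -
    have "n - i + a = b" using rng by (simp add: i_def)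
    then show ?thesis using Z1 vm by (simp add: Ncoef_def)
  qed
  moreover have "qint e (- m (a,b)) \<noteq> 0"
  proof
    assume "qint e (- m (a,b)) = 0"
    then have "int l dvd m (a,b)" using qint_zero[OF prim l2 odd] by simp
    moreover have "0 \<le> m (a,b)" "m (a,b) < int l"
      using Idx_in[OF mI, of a b] rng by (auto simp: in_range_def)
    ultimately show False using ne zdvd_imp_le by fastforce
  qed
  ultimately show False using vm by simp
qed

lemma E_col:
  assumes prim: "primitive_root l e" and l2: "l > 2" and odd: "odd l"
    and V: "v \<in> Vspace n l"
    and E0: "\<forall>i\<in>{1..n}. Eop n l e i v = (\<lambda>_. 0)"
    and Z2: "\<forall>a m. v m \<noteq> 0 \<longrightarrow> m (a, Suc b) = 0"
  shows "\<forall>m. v m \<noteq> 0 \<longrightarrow> m (a,b) = 0"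
proof (induction a)
  case 0
  show ?case using V by (auto simp: Vspace_def Idx_def in_range_def)
next
  case (Suc a)
  show ?case
  proof (intro allI impI)
    fix m assume vm: "v m \<noteq> 0"
    show "m (Suc a, b) = 0"
    proof (cases "in_range n (Suc a) b")
      case True
      then have r: "1 \<le> Suc a" "Suc a \<le> b" "b \<le> n" by (auto simp: in_range_def)
      have "n - b + Suc a \<in> {1..n}" using r by auto
      then have E: "Eop n l e (n - b + Suc a) v = (\<lambda>_. 0)" using E0 by blast
      show ?thesis
        by (rule E_step[OF prim l2 odd V E r]) (use Suc Z2 vm in auto)
    next
      case False
      then show ?thesis using V vm by (auto simp: Vspace_def Idx_def)
    qed
  qed
qed

lemma E_all:
  assumes prim: "primitive_root l e" and l2: "l > 2" and odd: "odd l"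
    and V: "v \<in> Vspace n l"
    and E0: "\<forall>i\<in>{1..n}. Eop n l e i v = (\<lambda>_. 0)"
  shows "v m \<noteq> 0 \<Longrightarrow> m (a,b) = 0"
proof -
  have "\<forall>b. n - b = d \<longrightarrow> (\<forall>a m. v m \<noteq> 0 \<longrightarrow> m (a,b) = 0)" for d
  proof (induction d)
    case 0
    show ?case
    proof (intro allI impI)
      fix b a m assume "n - b = 0" "v m \<noteq> 0"
      have "\<forall>a m. v m \<noteq> 0 \<longrightarrow> m (a, Suc b) = 0"
      proof (intro allI impI)
        fix a' m' assume "v m' \<noteq> 0"
        then have "m' \<in> Idx n l" using V by (auto simp: Vspace_def)
        moreover have "\<not> in_range n a' (Suc b)" using \<open>n - b = 0\<close> by (simp add: in_range_def)
        ultimately show "m' (a', Suc b) = 0" by (rule Idx_out)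
      qed
      then show "m (a,b) = 0" using E_col[OF prim l2 odd V E0] \<open>v m \<noteq> 0\<close> by blast
    qed
  next
    case (Suc d)
    show ?case
    proof (intro allI impI)
      fix b a m assume "n - b = Suc d" "v m \<noteq> 0"
      then have "n - Suc b = d" by simp
      then have "\<forall>a m. v m \<noteq> 0 \<longrightarrow> m (a, Suc b) = 0" using Suc by blast
      then show "m (a,b) = 0" using E_col[OF prim l2 odd V E0] \<open>v m \<noteq> 0\<close> by blast
    qed
  qed
  then show "v m \<noteq> 0 \<Longrightarrow> m (a,b) = 0" by blast
qed



lemma F_step:
  assumes prim: "primitive_root l e" and l2: "l > 2" and odd: "odd l"
    and V: "v \<in> Vspace n l"
    and F0: "Fop n l e lam i v = (\<lambda>_. 0)"
    and rng: "1 \<le> i" "i \<le> j" "j \<le> n"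
    and IH: "i < n \<Longrightarrow> \<forall>b m. Suc i \<le> b \<and> b \<le> n \<and> v m \<noteq> 0 \<longrightarrow> int l dvd (Mcoef n m (Suc i) b - int (lam (Suc i)))"
    and vm: "v m \<noteq> 0"
  shows "int l dvd (Mcoef n m i j - int (lam i))"
proof (rule ccontr)
  assume nd: "\<not> int l dvd (Mcoef n m i j - int (lam i))"
  define t where "t = red n l (\<lambda>p. m p + unitv i j p)"
  have mI: "m \<in> Idx n l" using V vm by (auto simp: Vspace_def)
  have ji: "j \<in> {i..n}" using rng by simp
  have key: "(if red n l (\<lambda>p. m' p + unitv i j' p) = t then v m' * qint e (Mcoef n m' i j' - int (lam i)) else 0)
      = (if m' = m \<and> j' = j then v m * qint e (Mcoef n m i j - int (lam i)) else 0)"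
    if m': "m' \<in> Idx n l" and j': "j' \<in> {i..n}" for m' j'
  proof (cases "red n l (\<lambda>p. m' p + unitv i j' p) = t")
    case False
    then show ?thesis by (auto simp: t_def)
  next
    case rt: True
    show ?thesis
    proof (cases "v m' = 0")
      case True
      then show ?thesis using vm by auto
    next
      case vm': False
      show ?thesis
      proof (cases "j' = j")
        case True
        then have "m' = m" using red_inj[OF m' mI] rt unfolding t_def by blast
        then show ?thesis using True rt by simp
      next
        case False
        have eq: "\<And>p. red n l (\<lambda>p. m' p + unitv i j' p) p = red n l (\<lambda>p. m p + unitv i j p) p"
          using rt t_def by simp
        have i_n: "i < n" using False j' rng by auto
        define b where "b = max j j'"
        have b: "Suc i \<le> b" "b \<le> n" using False j' rng by (auto simp: b_def)
        have d1: "int l dvd (Mcoef n m' (Suc i) b - int (lam (Suc i)))"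
          using IH[OF i_n] b vm' by blast
        have d2: "int l dvd (Mcoef n m (Suc i) b - int (lam (Suc i)))"
          using IH[OF i_n] b vm by blast
        define D where "D = (\<lambda>p. m' p - m p)"
        define U where "U = (\<lambda>p. unitv i j p - unitv i j' p)"
        have DU: "\<forall>p. int l dvd (D p - U p)"
        proof
          fix p :: "nat \<times> nat"
          obtain x y where p: "p = (x,y)" by force
          show "int l dvd (D p - U p)"
          proof (cases "in_range n x y")
            case True
            have "(m' (x,y) + unitv i j' (x,y)) mod int l = (m (x,y) + unitv i j (x,y)) mod int l"
              using eq[of "(x,y)"] True by (simp add: red_apply)
            then have "int l dvd (m' (x,y) + unitv i j' (x,y)) - (m (x,y) + unitv i j (x,y))"
              by (simp only: mod_eq_dvd_iff)
            moreover have "D p - U p = (m' (x,y) + unitv i j' (x,y)) - (m (x,y) + unitv i j (x,y))"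
              by (simp add: D_def U_def p)
            ultimately show ?thesis by simp
          next
            case False
            have "m' (x,y) = 0" "m (x,y) = 0" using Idx_out[OF m' False] Idx_out[OF mI False] by auto
            moreover have "(x,y) \<noteq> (i,j)" "(x,y) \<noteq> (i,j')" using False rng j' by (auto simp: in_range_def)
            then have "unitv i j (x,y) = 0" "unitv i j' (x,y) = 0" by (simp_all only: unitv_def if_False)
            ultimately show ?thesis by (simp add: D_def U_def p)
          qed
        qed
        have "int l dvd Mcoef n (\<lambda>p. D p - U p) (Suc i) b" by (rule Mcoef_dvd) (rule DU)
        then have A: "int l dvd (Mcoef n m' (Suc i) b - Mcoef n m (Suc i) b) - (Mcoef n (unitv i j) (Suc i) b - Mcoef n (unitv i j') (Suc i) b)"
          unfolding D_def U_def Mcoef_diff by simp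
        have B: "int l dvd (Mcoef n m' (Suc i) b - Mcoef n m (Suc i) b)"
          using dvd_diff[OF d1 d2] by simp
        have C: "int l dvd (Mcoef n (unitv i j) (Suc i) b - Mcoef n (unitv i j') (Suc i) b)"
          using dvd_diff[OF B A] by simp
        have "Mcoef n (unitv i j) (Suc i) b - Mcoef n (unitv i j') (Suc i) b = -1
            \<or> Mcoef n (unitv i j) (Suc i) b - Mcoef n (unitv i j') (Suc i) b = 1"
        proof (cases "j < j'")
          case True
          then show ?thesis using rng j' by (auto simp: Mcoef_unit_below b_def)
        next
          case False
          then have "j' < j" using \<open>j' \<noteq> j\<close> by simp
          then show ?thesis using rng j' by (auto simp: Mcoef_unit_below b_def)
        qed
        then have "int l dvd 1" using C by auto
        then show ?thesis using l2 by simp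
      qed
    qed
  qed
  have "Fop n l e lam i v t = v m * qint e (Mcoef n m i j - int (lam i))"
    unfolding Fop_def by (rule sum_single[OF finite_Idx _ mI ji]) (simp_all add: key)
  moreover have "Fop n l e lam i v t = 0" using F0 by simp
  moreover have "qint e (Mcoef n m i j - int (lam i)) \<noteq> 0"
    using qint_zero[OF prim l2 odd] nd by simp
  ultimately show False using vm by simp
qed

lemma F_all:
  assumes prim: "primitive_root l e" and l2: "l > 2" and odd: "odd l"
    and V: "v \<in> Vspace n l"
    and F0: "\<forall>i\<in>{1..n}. Fop n l e lam i v = (\<lambda>_. 0)"
  shows "1 \<le> i \<Longrightarrow> i \<le> j \<Longrightarrow> j \<le> n \<Longrightarrow> v m \<noteq> 0 \<Longrightarrow> int l dvd (Mcoef n m i j - int (lam i))"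
proof -
  have R: "\<forall>k. n - k = d \<and> 1 \<le> k \<and> k \<le> n \<longrightarrow> (\<forall>b m. k \<le> b \<and> b \<le> n \<and> v m \<noteq> 0 \<longrightarrow> int l dvd (Mcoef n m k b - int (lam k)))" for d
  proof (induction d)
    case 0
    show ?case
    proof (intro allI impI, elim conjE)
      fix k b m assume k: "n - k = 0" "1 \<le> k" "k \<le> n" "k \<le> b" "b \<le> n" "v m \<noteq> 0"
      have F: "Fop n l e lam k v = (\<lambda>_. 0)" using F0 k by auto
      show "int l dvd (Mcoef n m k b - int (lam k))"
        by (rule F_step[OF prim l2 odd V F]) (use k in auto)
    qed
  next
    case (Suc d)
    show ?case
    proof (intro allI impI, elim conjE)
      fix k b m assume k: "n - k = Suc d" "1 \<le> k" "k \<le> n" "k \<le> b" "b \<le> n" "v m \<noteq> 0"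
      have F: "Fop n l e lam k v = (\<lambda>_. 0)" using F0 k by auto
      have "n - Suc k = d" "1 \<le> Suc k" "Suc k \<le> n" using k by auto
      then have IH: "\<forall>b m. Suc k \<le> b \<and> b \<le> n \<and> v m \<noteq> 0 \<longrightarrow> int l dvd (Mcoef n m (Suc k) b - int (lam (Suc k)))"
        using Suc by blast
      show "int l dvd (Mcoef n m k b - int (lam k))"
        by (rule F_step[OF prim l2 odd V F]) (use k IH in auto)
    qed
  qed
  show "1 \<le> i \<Longrightarrow> i \<le> j \<Longrightarrow> j \<le> n \<Longrightarrow> v m \<noteq> 0 \<Longrightarrow> int l dvd (Mcoef n m i j - int (lam i))"
    using R[of "n - i", rule_format, of i j m] by linarith
qed

lemma uniq_dvd:
  assumes out: "\<forall>a b. \<not> in_range n a b \<longrightarrow> d (a,b) = 0"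
    and M: "\<forall>i j. in_range n i j \<longrightarrow> (k::int) dvd Mcoef n d i j"
  shows "k dvd d (a,b)"
proof -
  have diag: "k dvd d (i,i)" for i
  proof (induction i)
    case 0 then show ?case using out by (simp add: in_range_def)
  next
    case (Suc i)
    show ?case
    proof (cases "Suc i \<le> n")
      case True
      then have "k dvd Mcoef n d (Suc i) (Suc i)" using M by (simp add: in_range_def)
      then have "k dvd d (Suc i, Suc i) - d (i,i)" using Mcoef_diag[OF out, of "Suc i"] by simp
      then show ?thesis using Suc dvd_add[of k "d (Suc i, Suc i) - d (i,i)" "d (i,i)"] by simp
    next
      case False
      then show ?thesis using out by (simp add: in_range_def)
    qed
  qed
  have col: "\<forall>a. k dvd d (a,b)" for b
  proof (induction b)
    case 0 then show ?case using out by (simp add: in_range_def)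
  next
    case (Suc b)
    have low: "k dvd d (a, Suc b)" if "a \<le> Suc b" for a
      using that
    proof (induction a rule: inc_induct)
      case base then show ?case using diag by simp
    next
      case (step a)
      show ?case
      proof (cases "1 \<le> a \<and> Suc b \<le> n")
        case True
        then have r: "1 \<le> a" "a \<le> b" "Suc b \<le> n" using step by auto
        have m1: "k dvd Mcoef n d a (Suc b)" "k dvd Mcoef n d a b" using M r by (auto simp: in_range_def)
        have eq: "d (a, Suc b) = (Mcoef n d a (Suc b) - Mcoef n d a b) - d (a,b) + d (a-1,b) + d (Suc a, Suc b)"
          using Mcoef_Suc[OF r(1,2), of n d] by simp
        show ?thesis unfolding eq using m1 Suc step
          by (intro dvd_add dvd_diff) auto
      next
        case False
        then show ?thesis using out by (auto simp: in_range_def)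
      qed
    qed
    show ?case
    proof
      fix a show "k dvd d (a, Suc b)"
      proof (cases "a \<le> Suc b")
        case True then show ?thesis using low by blast
      next
        case False
        then have "d (a, Suc b) = 0" using out by (simp add: in_range_def)
        then show ?thesis by simp
      qed
    qed
  qed
  then show ?thesis by blast
qed



definition Ssum :: "(nat \<Rightarrow> nat) \<Rightarrow> nat \<Rightarrow> nat \<Rightarrow> int" where
  "Ssum lam i k = (\<Sum>t\<in>{1..i}. int (lam (k - t + 1)))"

lemma Ssum_Suc: "i < k \<Longrightarrow> Ssum lam (Suc i) k = Ssum lam i k + int (lam (k - i))"
  unfolding Ssum_def by (simp add: Suc_diff_Suc)

lemma Ssum_diag: "Ssum lam (Suc i) (Suc i) = int (lam (Suc i)) + Ssum lam i i"
proof -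
  have "Ssum lam (Suc i) (Suc i) = int (lam (Suc i - 1 + 1)) + (\<Sum>t\<in>{Suc 1..Suc i}. int (lam (Suc i - t + 1)))"
    unfolding Ssum_def by (subst sum.atLeast_Suc_atMost) simp_all
  also have "(\<Sum>t\<in>{Suc 1..Suc i}. int (lam (Suc i - t + 1))) = Ssum lam i i"
    unfolding Ssum_def by (subst sum.shift_bounds_cl_Suc_ivl) simp
  finally show ?thesis by simp
qed

lemma mlam_out: "\<not> in_range n a b \<Longrightarrow> mlam n l lam (a,b) = 0"
  by (simp add: mlam_def)

lemma mlam_S: "i \<le> j \<Longrightarrow> j \<le> n \<Longrightarrow> int l dvd (mlam n l lam (i,j) - Ssum lam i j)"
proof (cases "i = 0")
  case True
  then show ?thesis by (simp add: mlam_def in_range_def Ssum_def)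
next
  case False
  assume "i \<le> j" "j \<le> n"
  then have r: "in_range n i j" using False by (simp add: in_range_def)
  have "int l dvd Ssum lam i j - Ssum lam i j mod int l" by (rule dvd_minus_mod)
  then have "int l dvd - (Ssum lam i j - Ssum lam i j mod int l)" by (simp only: dvd_minus_iff)
  then show ?thesis using r by (simp add: mlam_def Ssum_def)
qed

lemma Mcoef_mlam:
  assumes "1 \<le> i" "i \<le> j" "j \<le> n"
  shows "int l dvd (Mcoef n (mlam n l lam) i j - int (lam i))"
proof -
  let ?d = "mlam n l lam"
  have out: "\<forall>a b. \<not> in_range n a b \<longrightarrow> ?d (a,b) = 0" by (simp add: mlam_out)
  have "j \<le> n \<longrightarrow> int l dvd (Mcoef n ?d i j - int (lam i))"
    using assms(2)
  proof (induction j rule: dec_induct)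
    case base
    show ?case
    proof
      assume "i \<le> n"
      obtain i0 where i0: "i = Suc i0" using assms(1) by (cases i) auto
      have e: "Mcoef n ?d i i - int (lam i) = (?d (i,i) - Ssum lam i i) - (?d (i0,i0) - Ssum lam i0 i0)"
        using Mcoef_diag[OF out assms(1)] Ssum_diag[of lam i0] i0 by simp
      have f1: "int l dvd (?d (i,i) - Ssum lam i i)" using mlam_S[of i i n l lam] \<open>i \<le> n\<close> by simp
      have f2: "int l dvd (?d (i0,i0) - Ssum lam i0 i0)" using mlam_S[of i0 i0 n l lam] \<open>i \<le> n\<close> i0 by simp
      show "int l dvd (Mcoef n ?d i i - int (lam i))"
        unfolding e by (rule dvd_diff[OF f1 f2])
    qed
  next
    case (step k)
    show ?case
    proof
      assume kn: "Suc k \<le> n"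
      have IH: "int l dvd (Mcoef n ?d i k - int (lam i))" using step kn by simp
      obtain i0 where i0: "i = Suc i0" using assms(1) by (cases i) auto
      have s1: "Ssum lam i k = Ssum lam i0 k + int (lam (Suc k - i))"
        using Ssum_Suc[of i0 k lam] i0 step(1) by simp
      have s2: "Ssum lam (Suc i) (Suc k) = Ssum lam i (Suc k) + int (lam (Suc k - i))"
        using Ssum_Suc[of i "Suc k" lam] step(1) by simp
      have im1: "i - 1 = i0" using i0 by simp
      have m: "Mcoef n ?d i (Suc k) = Mcoef n ?d i k + ?d (i,k) - ?d (i0,k) + ?d (i,Suc k) - ?d (Suc i,Suc k)"
        using Mcoef_Suc[OF assms(1) step(1), of n ?d] unfolding im1 .
      have e: "Mcoef n ?d i (Suc k) - int (lam i) = (Mcoef n ?d i k - int (lam i))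
          + (?d (i,k) - Ssum lam i k) - (?d (i0,k) - Ssum lam i0 k)
          + (?d (i,Suc k) - Ssum lam i (Suc k)) - (?d (Suc i,Suc k) - Ssum lam (Suc i) (Suc k))"
        using m s1 s2 by linarith
      have f1: "int l dvd (?d (i,k) - Ssum lam i k)" using mlam_S[of i k n l lam] kn step(1) by simp
      have f2: "int l dvd (?d (i0,k) - Ssum lam i0 k)" using mlam_S[of i0 k n l lam] kn step(1) i0 by simp
      have f3: "int l dvd (?d (i,Suc k) - Ssum lam i (Suc k))" using mlam_S[of i "Suc k" n l lam] kn step(1) by simp
      have f4: "int l dvd (?d (Suc i,Suc k) - Ssum lam (Suc i) (Suc k))" using mlam_S[of "Suc i" "Suc k" n l lam] kn step(1) by simp
      show "int l dvd (Mcoef n ?d i (Suc k) - int (lam i))"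
        unfolding e by (rule dvd_diff[OF dvd_add[OF dvd_diff[OF dvd_add[OF IH f1] f2] f3] f4])
    qed
  qed
  then show ?thesis using assms by simp
qed

lemma qint_0: "qint e 0 = 0"
  by (simp add: qint_def)

theorem proposition5p8:
  fixes n l :: nat and \<epsilon> :: complex and lam :: "nat \<Rightarrow> nat" and v :: "label \<Rightarrow> complex"
  assumes "n \<ge> 1" and "l > 2" and "odd l" and "coprime l (n+1)"
    and "primitive_root l \<epsilon>"
    and "\<forall>i\<in>{1..n}. lam i < l"
    and "v \<in> Vspace n l"
  shows "((\<forall>i\<in>{1..n}. Eop n l \<epsilon> i v = (\<lambda>_. 0)) \<longleftrightarrow> (\<exists>c. v = (\<lambda>m. c * basis (\<lambda>_. 0) m)))
       \<and> ((\<forall>i\<in>{1..n}. Fop n l \<epsilon> lam i v = (\<lambda>_. 0)) \<longleftrightarrow> (\<exists>c. v = (\<lambda>m. c * basis (mlam n l lam) m)))"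
proof -
  note prim = assms(5) and l2 = assms(2) and odd = assms(3) and V = assms(7)
  have l0: "l > 0" using l2 by simp
  have partA: "(\<forall>i\<in>{1..n}. Eop n l \<epsilon> i v = (\<lambda>_. 0)) \<longleftrightarrow> (\<exists>c. v = (\<lambda>m. c * basis (\<lambda>_. 0) m))"
  proof
    assume E0: "\<forall>i\<in>{1..n}. Eop n l \<epsilon> i v = (\<lambda>_. 0)"
    have z: "m = (\<lambda>_. 0)" if "v m \<noteq> 0" for m
    proof
      fix p :: "nat \<times> nat"
      obtain a b where "p = (a,b)" by force
      then show "m p = 0" using E_all[OF prim l2 odd V E0 that] by simp
    qed
    have "v = (\<lambda>m. v (\<lambda>_. 0) * basis (\<lambda>_. 0) m)"
    proof
      fix m show "v m = v (\<lambda>_. 0) * basis (\<lambda>_. 0) m"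
        using z[of m] by (cases "m = (\<lambda>_. 0)") (auto simp: basis_def)
    qed
    then show "\<exists>c. v = (\<lambda>m. c * basis (\<lambda>_. 0) m)" by blast
  next
    assume "\<exists>c. v = (\<lambda>m. c * basis (\<lambda>_. 0) m)"
    then obtain c where c: "v = (\<lambda>m. c * basis (\<lambda>_. 0) m)" by blast
    show "\<forall>i\<in>{1..n}. Eop n l \<epsilon> i v = (\<lambda>_. 0)"
    proof (intro ballI ext)
      fix i m'
      show "Eop n l \<epsilon> i v m' = 0"
        unfolding Eop_def
      proof (intro sum.neutral ballI)
        fix m j
        show "(if red n l (\<lambda>p. m p + alpha n i j p) = m' then v m * qint \<epsilon> (Ncoef n m i j) else 0) = 0"
        proof (cases "m = (\<lambda>_. 0)")
          case True
          then show ?thesis by (simp add: Ncoef_def qint_0)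
        next
          case False
          then show ?thesis by (simp add: c basis_def)
        qed
      qed
    qed
  qed
  have partB: "(\<forall>i\<in>{1..n}. Fop n l \<epsilon> lam i v = (\<lambda>_. 0)) \<longleftrightarrow> (\<exists>c. v = (\<lambda>m. c * basis (mlam n l lam) m))"
  proof
    assume F0: "\<forall>i\<in>{1..n}. Fop n l \<epsilon> lam i v = (\<lambda>_. 0)"
    have z: "m = mlam n l lam" if vm: "v m \<noteq> 0" for m
    proof
      fix p :: "nat \<times> nat"
      obtain a b where p: "p = (a,b)" by force
      have mI: "m \<in> Idx n l" using V vm by (auto simp: Vspace_def)
      define d where "d = (\<lambda>p. m p - mlam n l lam p)"
      have out: "\<forall>a b. \<not> in_range n a b \<longrightarrow> d (a,b) = 0"
        using mI by (simp add: d_def Idx_out mlam_out)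
      have M: "\<forall>i j. in_range n i j \<longrightarrow> int l dvd Mcoef n d i j"
      proof (intro allI impI)
        fix i j assume r: "in_range n i j"
        then have r': "1 \<le> i" "i \<le> j" "j \<le> n" by (auto simp: in_range_def)
        have "int l dvd (Mcoef n m i j - int (lam i)) - (Mcoef n (mlam n l lam) i j - int (lam i))"
          using F_all[OF prim l2 odd V F0 r' vm] Mcoef_mlam[OF r'] by (rule dvd_diff)
        then show "int l dvd Mcoef n d i j" unfolding d_def Mcoef_diff by simp
      qed
      have dv: "int l dvd d (a,b)" by (rule uniq_dvd[OF out M])
      show "m p = mlam n l lam p"
      proof (cases "in_range n a b")
        case True
        have b1: "0 \<le> m (a,b)" "m (a,b) < int l" using Idx_in[OF mI True] by auto
        have b2: "mlam n l lam (a,b) = (Ssum lam a b) mod int l" using True by (simp add: mlam_def Ssum_def)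
        then have b3: "0 \<le> mlam n l lam (a,b)" "mlam n l lam (a,b) < int l" using l0 by simp_all
        have "m (a,b) mod int l = mlam n l lam (a,b) mod int l"
          using dv by (simp add: d_def mod_eq_dvd_iff)
        then show ?thesis using b1 b3 p by simp
      next
        case False
        then show ?thesis using Idx_out[OF mI False] mlam_out[OF False] p by simp
      qed
    qed
    have "v = (\<lambda>m. v (mlam n l lam) * basis (mlam n l lam) m)"
    proof
      fix m show "v m = v (mlam n l lam) * basis (mlam n l lam) m"
        using z[of m] by (cases "m = mlam n l lam") (auto simp: basis_def)
    qed
    then show "\<exists>c. v = (\<lambda>m. c * basis (mlam n l lam) m)" by blast
  next
    assume "\<exists>c. v = (\<lambda>m. c * basis (mlam n l lam) m)"
    then obtain c where c: "v = (\<lambda>m. c * basis (mlam n l lam) m)" by blast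
    show "\<forall>i\<in>{1..n}. Fop n l \<epsilon> lam i v = (\<lambda>_. 0)"
    proof (intro ballI ext)
      fix i m' assume i: "i \<in> {1..n}"
      show "Fop n l \<epsilon> lam i v m' = 0"
        unfolding Fop_def
      proof (intro sum.neutral ballI)
        fix m j assume j: "j \<in> {i..n}"
        show "(if red n l (\<lambda>p. m p + unitv i j p) = m' then v m * qint \<epsilon> (Mcoef n m i j - int (lam i)) else 0) = 0"
        proof (cases "m = mlam n l lam")
          case True
          have "1 \<le> i" "i \<le> j" "j \<le> n" using i j by auto
          then have "int l dvd (Mcoef n (mlam n l lam) i j - int (lam i))" by (rule Mcoef_mlam)
          then have "qint \<epsilon> (Mcoef n m i j - int (lam i)) = 0"
            using qint_zero[OF prim l2 odd] True by simp
          then show ?thesis by simp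
        next
          case False
          then show ?thesis by (simp add: c basis_def)
        qed
      qed
    qed
  qed
  show ?thesis using partA partB by blast
qed

end
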